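(* Let $\epsilon\le 1/16$ and consider the $(6,3)$-majority algorithm against a late $\epsilon$-bounded adaptive blocking adversary. For any assignment of values to the nodes such that at least $3n/4$ nodes are defined at the end of round $t$, with high probability at least $3n/4$ nodes are defined at the end of round $t+1$.
   Context: Model: $n$ anonymous nodes, fully interconnected, synchronous rounds; in each round every node first receives the non-blocked messages sent to it in the previous round, computes, then sends messages. Late $\epsilon$-bounded adaptive adversary: at the start of each round $t\ge2$ it knows the full system state at the beginning of round $t-1$ and blocks a set of at most $\epsilon n$ nodes in round $t$ (blocked nodes neither send nor receive in that round and know they are blocked); in round 1 it knows the initial state but not that round's coin flips. W.h.p. means with probability at least $1-n^{-\Omega(1)}$. $(k,\ell)$-majority algorithm: each node $u$ has $x_u\in\{0,1,\bot\}$, and $u$ is defined iff $x_u\neq\bot$. In each round: if $u$ received fewer than $\ell$ values from the previous round or is blocked, it sets $x_u:=\bot$ and skips the rest of the round; otherwise it picks $\ell$ of the received values uniformly at random, sets $x_u$ to their majority, and sends $x_u$ to $k$ nodes chosen independently and uniformly at random. *)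

theory Defs
  imports "HOL-Probability.Probability"
begin

text \<open>
  One synchronous round of the (k,l)-majority algorithm on n anonymous nodes 0..n-1.
  A node value is a bool option: None is the undefined value (bot), Some b the bit b.
  A message is identified by its slot (v,i): the i-th message (i < k) sent by node v.
  tgt (v,i) is the receiver chosen (uniformly, independently) for slot (v,i).
\<close>

type_synonym state = "nat \<Rightarrow> bool option"

definition defined_nodes :: "nat \<Rightarrow> state \<Rightarrow> nat set" where
  "defined_nodes n x = {u. u < n \<and> x u \<noteq> None}"

definition received :: "nat \<Rightarrow> nat \<Rightarrow> state \<Rightarrow> (nat \<times> nat \<Rightarrow> nat) \<Rightarrow> nat \<Rightarrow> (nat \<times> nat) set" where
  "received n k x tgt u = {(v, i). v < n \<and> i < k \<and> x v \<noteq> None \<and> tgt (v, i) = u}"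

definition targets_pmf :: "nat \<Rightarrow> nat \<Rightarrow> (nat \<times> nat \<Rightarrow> nat) pmf" where
  "targets_pmf n k = Pi_pmf ({..<n} \<times> {..<k}) 0 (\<lambda>_. pmf_of_set {..<n})"

definition majority_of :: "state \<Rightarrow> (nat \<times> nat) set \<Rightarrow> bool" where
  "majority_of x S = (2 * card {s \<in> S. x (fst s) = Some True} > card S)"

definition active :: "nat \<Rightarrow> nat \<Rightarrow> nat \<Rightarrow> state \<Rightarrow> nat set \<Rightarrow> (nat \<times> nat \<Rightarrow> nat) \<Rightarrow> nat \<Rightarrow> bool" where
  "active n k l x B tgt u = (u \<notin> B \<and> card (received n k x tgt u) \<ge> l)"

definition picks_pmf :: "nat \<Rightarrow> nat \<Rightarrow> nat \<Rightarrow> state \<Rightarrow> nat set \<Rightarrow> (nat \<times> nat \<Rightarrow> nat)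
    \<Rightarrow> (nat \<Rightarrow> (nat \<times> nat) set) pmf" where
  "picks_pmf n k l x B tgt = Pi_pmf {..<n} {}
     (\<lambda>u. if active n k l x B tgt u
          then pmf_of_set {S. S \<subseteq> received n k x tgt u \<and> card S = l}
          else return_pmf {})"

definition new_state :: "nat \<Rightarrow> nat \<Rightarrow> nat \<Rightarrow> state \<Rightarrow> nat set \<Rightarrow> (nat \<times> nat \<Rightarrow> nat)
    \<Rightarrow> (nat \<Rightarrow> (nat \<times> nat) set) \<Rightarrow> state" where
  "new_state n k l x B tgt pick =
     (\<lambda>u. if u < n \<and> active n k l x B tgt u then Some (majority_of x (pick u)) else None)"

text \<open>Distribution of the state at the end of round t+1, given the state x at the end of
  round t (whose messages are sent to random targets) and the blocked set B of round t+1.\<close>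
definition round_pmf :: "nat \<Rightarrow> nat \<Rightarrow> nat \<Rightarrow> state \<Rightarrow> nat set \<Rightarrow> state pmf" where
  "round_pmf n k l x B =
     do { tgt \<leftarrow> targets_pmf n k;
          pick \<leftarrow> picks_pmf n k l x B tgt;
          return_pmf (new_state n k l x B tgt pick) }"

end

theory Submission
  imports Defs "HOL-Real_Asymp.Real_Asymp"
begin


lemma exp_pair_fin:
  fixes F :: "'a \<times> 'b \<Rightarrow> real"
  assumes fa: "finite (set_pmf A)" and fb: "finite (set_pmf B)"
  shows "measure_pmf.expectation (pair_pmf A B) F =
         measure_pmf.expectation A (\<lambda>a. measure_pmf.expectation B (\<lambda>b. F (a,b)))"
proof -
  have "measure_pmf.expectation (pair_pmf A B) F = (\<Sum>x\<in>set_pmf A \<times> set_pmf B. F x * pmf (pair_pmf A B) x)"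
    by (rule integral_measure_pmf_real) (auto simp: fa fb set_pair_pmf)
  also have "\<dots> = (\<Sum>a\<in>set_pmf A. \<Sum>b\<in>set_pmf B. F (a,b) * (pmf A a * pmf B b))"
    by (subst sum.cartesian_product) (auto simp: pmf_pair intro!: sum.cong)
  also have "\<dots> = (\<Sum>a\<in>set_pmf A. (\<Sum>b\<in>set_pmf B. F (a,b) * pmf B b) * pmf A a)"
    by (intro sum.cong refl) (simp add: sum_distrib_right mult_ac, simp add: sum_distrib_left)
  also have "\<dots> = measure_pmf.expectation A (\<lambda>a. measure_pmf.expectation B (\<lambda>b. F (a,b)))"
  proof -
    have e: "measure_pmf.expectation B (\<lambda>b. F (a,b)) = (\<Sum>b\<in>set_pmf B. F (a,b) * pmf B b)" for a
      by (rule integral_measure_pmf_real) (auto simp: fb)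
    show ?thesis unfolding e
      by (rule integral_measure_pmf_real[symmetric]) (auto simp: fa)
  qed
  finally show ?thesis .
qed

lemma fin_Pi_pmf:
  assumes "finite I" "\<And>i. i \<in> I \<Longrightarrow> finite (set_pmf (p i))"
  shows "finite (set_pmf (Pi_pmf I d p))"
  using assms by (simp add: set_Pi_pmf finite_PiE_dflt)

lemma mcd_mgf:
  fixes p :: "'i \<Rightarrow> 'a pmf" and f :: "('i \<Rightarrow> 'a) \<Rightarrow> real" and c :: "'i \<Rightarrow> real"
  assumes "finite I" "\<And>i. i\<in>I \<Longrightarrow> finite (set_pmf (p i))" "t > 0"
    "\<And>i g a b. i \<in> I \<Longrightarrow> f (g(i:=a)) - f (g(i:=b)) \<le> c i"
  shows "measure_pmf.expectation (Pi_pmf I d p)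
           (\<lambda>X. exp (t * (f X - measure_pmf.expectation (Pi_pmf I d p) f)))
         \<le> exp (t\<^sup>2 * (\<Sum>i\<in>I. (c i)\<^sup>2) / 8)"
  using assms(1,2,4)
proof (induction I arbitrary: f rule: finite_induct)
  case empty
  then show ?case by simp
next
  case (insert i I)
  define Q where "Q = Pi_pmf I d p"
  have finQ: "finite (set_pmf Q)" unfolding Q_def using insert by (intro fin_Pi_pmf) auto
  have fini: "finite (set_pmf (p i))" using insert by auto
  have PI: "Pi_pmf (insert i I) d p = map_pmf (\<lambda>(y,X). X(i:=y)) (pair_pmf (p i) Q)"
    unfolding Q_def using insert by (simp add: Pi_pmf_insert)
  define h where "h y = measure_pmf.expectation Q (\<lambda>X. f (X(i:=y)))" for y
  define mu where "mu = measure_pmf.expectation (Pi_pmf (insert i I) d p) f"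
  have mu: "mu = measure_pmf.expectation (p i) h"
    unfolding mu_def PI h_def by (simp add: exp_pair_fin[OF fini finQ] case_prod_beta)
  have IH: "measure_pmf.expectation Q (\<lambda>X. exp (t * (f (X(i:=y)) - h y)))
            \<le> exp (t\<^sup>2 * (\<Sum>j\<in>I. (c j)\<^sup>2) / 8)" for y
  proof -
    have "\<And>j g a b. j \<in> I \<Longrightarrow> f ((g(j:=a))(i:=y)) - f ((g(j:=b))(i:=y)) \<le> c j"
    proof -
      fix j g a b assume j: "j \<in> I"
      hence ij: "i \<noteq> j" using insert by auto
      have "(g(j:=a))(i:=y) = (g(i:=y))(j:=a)" "(g(j:=b))(i:=y) = (g(i:=y))(j:=b)"
        using ij by (auto simp: fun_upd_twist)
      moreover have "f ((g(i:=y))(j:=a)) - f ((g(i:=y))(j:=b)) \<le> c j" using j by (intro insert.prems(2)) auto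
      ultimately show "f ((g(j:=a))(i:=y)) - f ((g(j:=b))(i:=y)) \<le> c j" by metis
    qed
    from insert.IH[of "\<lambda>X. f (X(i:=y))", OF _ this] insert.prems(1)
    show ?thesis unfolding Q_def h_def by auto
  qed
  have hdiff: "h y - h y' \<le> c i" for y y'
  proof -
    have "h y - h y' = measure_pmf.expectation Q (\<lambda>X. f (X(i:=y)) - f (X(i:=y')))"
      unfolding h_def
      by (rule Bochner_Integration.integral_diff[symmetric]) (auto intro: integrable_measure_pmf_finite finQ)
    also have "\<dots> \<le> measure_pmf.expectation Q (\<lambda>X. c i)"
      by (rule integral_mono) (auto intro: integrable_measure_pmf_finite finQ insert.prems(2))
    finally show ?thesis by simp
  qed
  define a where "a = Min (h ` set_pmf (p i))"
  have ne: "set_pmf (p i) \<noteq> {}" by (simp add: set_pmf_not_empty)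
  have hin: "h y \<in> {a..a + c i}" if "y \<in> set_pmf (p i)" for y
  proof -
    have "a \<in> h ` set_pmf (p i)" unfolding a_def using fini ne by (intro Min_in) auto
    then obtain y' where "a = h y'" by auto
    moreover have "a \<le> h y" unfolding a_def using fini that by auto
    ultimately show ?thesis using hdiff[of y y'] by auto
  qed
  interpret hb: interval_bounded_random_variable "measure_pmf (p i)" h a "a + c i"
  proof unfold_locales
    show "AE x in measure_pmf (p i). h x \<in> {a..a + c i}"
      unfolding AE_measure_pmf_iff using hin by blast
  qed simp
  have hoef: "measure_pmf.expectation (p i) (\<lambda>y. exp (t * (h y - mu))) \<le> exp (t\<^sup>2 * (c i)\<^sup>2 / 8)"
  proof -
    have "ennreal (measure_pmf.expectation (p i) (\<lambda>y. exp (t * (h y - mu))))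
        = nn_integral (p i) (\<lambda>y. exp (t * (h y - mu)))"
      by (rule nn_integral_eq_integral[symmetric]) (auto intro: integrable_measure_pmf_finite fini)
    also have "\<dots> \<le> ennreal (exp (t\<^sup>2 * (a + c i - a)\<^sup>2 / 8))"
      using hb.Hoeffdings_lemma_nn_integral[OF \<open>t > 0\<close>] unfolding mu by simp
    finally show ?thesis by (simp add: ennreal_le_iff2)  
  qed
  have "measure_pmf.expectation (Pi_pmf (insert i I) d p) (\<lambda>X. exp (t * (f X - mu)))
      = measure_pmf.expectation (p i) (\<lambda>y. measure_pmf.expectation Q (\<lambda>X. exp (t * (f (X(i:=y)) - mu))))"
    unfolding PI by (simp add: exp_pair_fin[OF fini finQ] case_prod_beta)
  also have "\<dots> = measure_pmf.expectation (p i) (\<lambda>y. exp (t * (h y - mu)) *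
        measure_pmf.expectation Q (\<lambda>X. exp (t * (f (X(i:=y)) - h y))))"
  proof -
    have "exp (t * (f (X(i:=y)) - mu)) = exp (t * (h y - mu)) * exp (t * (f (X(i:=y)) - h y))" for X y
      by (simp add: exp_add[symmetric] algebra_simps)
    thus ?thesis by simp
  qed
  also have "\<dots> \<le> measure_pmf.expectation (p i) (\<lambda>y. exp (t * (h y - mu)) * exp (t\<^sup>2 * (\<Sum>j\<in>I. (c j)\<^sup>2) / 8))"
    by (rule integral_mono) (auto intro: integrable_measure_pmf_finite fini mult_left_mono IH)
  also have "\<dots> = measure_pmf.expectation (p i) (\<lambda>y. exp (t * (h y - mu))) * exp (t\<^sup>2 * (\<Sum>j\<in>I. (c j)\<^sup>2) / 8)"
    by simp
  also have "\<dots> \<le> exp (t\<^sup>2 * (c i)\<^sup>2 / 8) * exp (t\<^sup>2 * (\<Sum>j\<in>I. (c j)\<^sup>2) / 8)"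
    by (rule mult_right_mono[OF hoef]) simp
  also have "\<dots> = exp (t\<^sup>2 * (\<Sum>j\<in>insert i I. (c j)\<^sup>2) / 8)"
    using insert by (simp add: exp_add[symmetric] algebra_simps add_divide_distrib)
  finally show ?case unfolding mu_def .
qed



lemma mcd_tail:
  fixes p :: "'i \<Rightarrow> 'a pmf" and f :: "('i \<Rightarrow> 'a) \<Rightarrow> real" and c :: "'i \<Rightarrow> real"
  assumes fin: "finite I" and fs: "\<And>i. i\<in>I \<Longrightarrow> finite (set_pmf (p i))" and s: "s > 0"
    and bd: "\<And>i g a b. i \<in> I \<Longrightarrow> f (g(i:=a)) - f (g(i:=b)) \<le> c i"
    and C: "(\<Sum>i\<in>I. (c i)\<^sup>2) = C" "C > 0"
  shows "measure_pmf.prob (Pi_pmf I d p)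
           {X. f X \<ge> measure_pmf.expectation (Pi_pmf I d p) f + s} \<le> exp (- 2 * s\<^sup>2 / C)"
proof -
  define M where "M = Pi_pmf I d p"
  define E where "E = measure_pmf.expectation M f"
  define t where "t = 4 * s / C"
  have t: "t > 0" using s C by (simp add: t_def)
  have finM: "finite (set_pmf M)" unfolding M_def using fin fs by (rule fin_Pi_pmf)
  have "measure_pmf.prob M {X. f X \<ge> E + s} = measure_pmf.expectation M (indicator {X. f X \<ge> E + s})"
    by simp
  also have "\<dots> \<le> measure_pmf.expectation M (\<lambda>X. exp (t * (f X - E)) * exp (- t * s))"
  proof (rule integral_mono)
    fix X
    show "indicator {X. f X \<ge> E + s} X \<le> exp (t * (f X - E)) * exp (- t * s)"
    proof (cases "f X \<ge> E + s")
      case True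
      hence "t * s \<le> t * (f X - E)" using t by (intro mult_left_mono) auto
      hence "1 \<le> exp (t * (f X - E) + - t * s)" by simp
      thus ?thesis using True by (simp only: exp_add[symmetric]) simp
    qed simp
  qed (auto intro: integrable_measure_pmf_finite finM)
  also have "\<dots> = measure_pmf.expectation M (\<lambda>X. exp (t * (f X - E))) * exp (- t * s)"
    by simp
  also have "\<dots> \<le> exp (t\<^sup>2 * C / 8) * exp (- t * s)"
    using mcd_mgf[where I=I and p=p and t=t and f=f and c=c and d=d, OF fin fs t bd] C unfolding M_def E_def by (intro mult_right_mono) auto
  also have "\<dots> = exp (- 2 * s\<^sup>2 / C)"
    using C by (simp add: exp_add[symmetric] t_def power2_eq_square field_simps)
  finally show ?thesis unfolding M_def E_def .
qed

definition Zf :: "nat \<Rightarrow> state \<Rightarrow> (nat \<times> nat \<Rightarrow> nat) \<Rightarrow> nat" where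
  "Zf n x tgt = card {u. u < n \<and> card (received n 6 x tgt u) < 3}"

lemma received_fin: "finite (received n k x tgt u)"
proof -
  have "received n k x tgt u \<subseteq> {..<n} \<times> {..<k}" unfolding received_def by auto
  thus ?thesis by (rule finite_subset) auto
qed

lemma Zf_bd: "real (Zf n x (g(s:=a))) - real (Zf n x (g(s:=b))) \<le> 1"
proof -
  have sub: "{u. u < n \<and> card (received n 6 x (g(s:=a)) u) < 3}
     \<subseteq> insert b {u. u < n \<and> card (received n 6 x (g(s:=b)) u) < 3}"
  proof safe
    fix u assume u: "u < n" "card (received n 6 x (g(s:=a)) u) < 3" "u \<noteq> b"
    have "received n 6 x (g(s:=b)) u \<subseteq> received n 6 x (g(s:=a)) u"
      using u(3) unfolding received_def by (auto split: if_splits)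
    hence "card (received n 6 x (g(s:=b)) u) \<le> card (received n 6 x (g(s:=a)) u)"
      by (intro card_mono received_fin)
    thus "card (received n 6 x (g(s:=b)) u) < 3" using u by simp
  qed
  have "Zf n x (g(s:=a)) \<le> card (insert b {u. u < n \<and> card (received n 6 x (g(s:=b)) u) < 3})"
    unfolding Zf_def by (rule card_mono[OF _ sub]) auto
  also have "\<dots> \<le> Suc (Zf n x (g(s:=b)))" unfolding Zf_def by (rule card_insert_le_m1) auto
  finally show ?thesis by simp
qed

lemma round_reduce:
  "measure_pmf.prob (round_pmf n k l x B) {y. P (card (defined_nodes n y))}
   = measure_pmf.prob (targets_pmf n k) {tgt. P (card {u. u < n \<and> active n k l x B tgt u})}"
proof -
  define A where "A tgt = {u. u < n \<and> active n k l x B tgt u}" for tgt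
  have "map_pmf (defined_nodes n) (round_pmf n k l x B) = map_pmf A (targets_pmf n k)"
  proof -
    have dn: "defined_nodes n (new_state n k l x B tgt pick) = A tgt" for tgt pick
      unfolding defined_nodes_def new_state_def A_def by auto
    have "map_pmf (defined_nodes n) (round_pmf n k l x B)
        = targets_pmf n k \<bind> (\<lambda>tgt. picks_pmf n k l x B tgt \<bind> (\<lambda>pick. return_pmf (A tgt)))"
      unfolding round_pmf_def by (simp add: map_bind_pmf dn)
    also have "\<dots> = map_pmf A (targets_pmf n k)"
      by (simp add: map_pmf_def)
    finally show ?thesis .
  qed
  hence "measure_pmf.prob (map_pmf (defined_nodes n) (round_pmf n k l x B)) {D. P (card D)}
       = measure_pmf.prob (map_pmf A (targets_pmf n k)) {D. P (card D)}" by simp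
  thus ?thesis unfolding A_def by (simp add: vimage_def)
qed



lemma exp_45: "exp (9/2 :: real) \<ge> 87"
proof -
  have "(145/128 :: real) \<le> exp (1/8)"
    using exp_lower_Taylor_quadratic[of "1/8::real"] by (simp add: power2_eq_square)
  hence "(145/128 :: real) ^ 36 \<le> exp (1/8) ^ 36" by (intro power_mono) auto
  also have "exp (1/8 :: real) ^ 36 = exp (9/2)" using exp_of_nat_mult[of 36 "1/8::real"] by simp
  finally have "(145/128 :: real) ^ 36 \<le> exp (9/2)" .
  moreover have "(87::real) \<le> (145/128) ^ 36" unfolding power_divide by simp
  ultimately show ?thesis by linarith
qed

lemma g_mono:
  fixes l :: real assumes "l \<ge> 9/2"
  shows "exp (- l) * (1 + l + l\<^sup>2/2) \<le> exp (- 9/2) * (1 + 9/2 + (9/2)\<^sup>2/2)"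
proof -
  define mu where "mu = l - 9/2"
  have mu: "mu \<ge> 0" using assms by (simp add: mu_def)
  have e: "1 + mu + mu\<^sup>2/2 \<le> exp mu" using exp_lower_Taylor_quadratic[OF mu] .
  have "1 + l + l\<^sup>2/2 = (1 + 9/2 + (9/2)\<^sup>2/2) + mu * (1 + 9/2) + mu\<^sup>2/2"
    unfolding mu_def power2_eq_square by (simp add: field_simps)
  also have "\<dots> \<le> (1 + 9/2 + (9/2)\<^sup>2/2) * (1 + mu + mu\<^sup>2/2)"
  proof -
    have "(1 + 9/2 + (9/2)\<^sup>2/2) * (1 + mu + mu\<^sup>2/2) - ((1 + 9/2 + (9/2)\<^sup>2/2) + mu * (1 + 9/2) + mu\<^sup>2/2)
        = mu * (81/8) + mu\<^sup>2 * (117/16)" by (simp add: algebra_simps power2_eq_square)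
    moreover have "0 \<le> mu * (81/8) + mu\<^sup>2 * (117/16)" using mu by simp
    ultimately show ?thesis by linarith
  qed
  also have "\<dots> \<le> (1 + 9/2 + (9/2)\<^sup>2/2) * exp mu"
    using e by (intro mult_left_mono) auto
  finally have "1 + l + l\<^sup>2/2 \<le> (1 + 9/2 + (9/2)\<^sup>2/2) * exp mu" .
  hence "exp (- l) * (1 + l + l\<^sup>2/2) \<le> exp (- l) * ((1 + 9/2 + (9/2)\<^sup>2/2) * exp mu)"
    by (intro mult_left_mono) auto
  also have "\<dots> = exp (- 9/2) * (1 + 9/2 + (9/2)\<^sup>2/2)"
    by (simp add: mu_def mult_ac exp_add[symmetric])
  finally show ?thesis .
qed

lemma q_bound:
  fixes n m :: nat
  assumes n: "n \<ge> 200" and m: "real m \<ge> 9/2 * real n"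
  shows "(\<Sum>k<3. real (m choose k) * (1/real n)^k * (1 - 1/real n)^(m-k)) \<le> 23/125"
proof -
  define p where "p = 1 / real n"
  define r where "r = 1 - p"
  define l where "l = real m * p"
  have p: "p > 0" "p \<le> 1/200" using n by (auto simp: p_def field_simps)
  have r: "r > 0" "r \<le> 1" "r \<ge> 199/200" using p by (auto simp: r_def)
  have l: "l \<ge> 9/2" using m n by (simp add: l_def p_def field_simps)
  have m2: "m \<ge> 2" using m n by linarith
  have rm1: "r^(m-1) = r^m / r" using m2 r by (simp add: power_diff)
  have rm2: "r^(m-2) = r^m / r^2" using m2 r by (simp add: power_diff)
  have c2: "real (m choose 2) \<le> real m ^ 2 / 2"
  proof -
    have h: "(m choose 2) * 2 \<le> m * (m - 1)"
      unfolding choose_two using div_mult_mod_eq[of "m*(m-1)" 2] by linarith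
    have "real (m choose 2) = real ((m choose 2) * 2) / 2" by simp
    also have "\<dots> \<le> real (m * (m - 1)) / 2" by (intro divide_right_mono of_nat_mono h) simp
    also have "\<dots> \<le> real m ^ 2 / 2" by (simp add: power2_eq_square mult_left_mono)
    finally show ?thesis .
  qed
  have "(\<Sum>k<3. real (m choose k) * (1/real n)^k * (1 - 1/real n)^(m-k))
      = r^m + real m * p * r^(m-1) + real (m choose 2) * p^2 * r^(m-2)"
  proof -
    have e: "{..<3::nat} = {0,1,2}" by auto
    show ?thesis by (simp add: e p_def r_def)
  qed
  also have "\<dots> = r^m * (1 + l / r + real (m choose 2) * p^2 / r^2)"
    unfolding rm1 rm2 using r by (simp add: l_def field_simps)
  also have "\<dots> \<le> r^m * ((1 + l + l^2/2) / r^2)"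
  proof (intro mult_left_mono)
    have "1 \<le> 1 / r^2" using r by (simp add: field_simps power_le_one)
    moreover have "l / r \<le> l / r^2" using r l
      by (intro divide_left_mono) (auto simp: power2_eq_square mult_le_cancel_left1)
    moreover have "real (m choose 2) * p^2 / r^2 \<le> (l^2/2) / r^2"
      using c2 p r by (intro divide_right_mono) (auto simp: l_def power_mult_distrib intro: mult_right_mono)
    ultimately show "1 + l / r + real (m choose 2) * p^2 / r^2 \<le> (1 + l + l^2/2) / r^2"
      by (simp add: add_divide_distrib)
  qed (use r in auto)
  also have "\<dots> \<le> exp (- l) * (1 + l + l^2/2) / r^2"
  proof -
    have "r \<le> exp (- p)" unfolding r_def using exp_ge_add_one_self[of "-p"] by simp
    hence "r^m \<le> exp (- p) ^ m" using r by (intro power_mono) auto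
    also have "exp (- p) ^ m = exp (- l)" using exp_of_nat_mult[of m "-p"] by (simp add: l_def mult_ac)
    finally have "r^m \<le> exp (- l)" .
    moreover have "0 \<le> 1 + l + l^2/2" using l by simp
    ultimately have "r^m * (1 + l + l^2/2) / r^2 \<le> exp (- l) * (1 + l + l^2/2) / r^2"
      by (intro divide_right_mono mult_right_mono) auto
    thus ?thesis by simp
  qed
  also have "\<dots> \<le> exp (- 9/2) * (1 + 9/2 + (9/2)\<^sup>2/2) / r^2"
    using g_mono[OF l] r by (intro divide_right_mono) auto
  also have "\<dots> \<le> (1/87) * (1 + 9/2 + (9/2)\<^sup>2/2) / (199/200)^2"
  proof (intro divide_mono mult_right_mono)
    show "exp (- 9/2) \<le> (1/87 :: real)" using exp_45 by (simp add: exp_minus field_simps)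
    show "(199/200)^2 \<le> r^2" using r by (intro power_mono) auto
  qed auto
  also have "\<dots> \<le> 23/125" by (simp add: power2_eq_square divide_simps)
  finally show ?thesis .
qed



lemma bern_eq:
  assumes "u < n"
  shows "map_pmf (\<lambda>a. a = u) (pmf_of_set {..<n}) = bernoulli_pmf (1 / real n)"
proof (rule pmf_eqI)
  fix b :: bool
  have n: "n > 0" using assms by simp
  have fin: "finite {..<n}" "{..<n} \<noteq> {}" using n by auto
  show "pmf (map_pmf (\<lambda>a. a = u) (pmf_of_set {..<n})) b = pmf (bernoulli_pmf (1 / real n)) b"
  proof (cases b)
    case True
    have "{..<n} \<inter> (\<lambda>a. a = u) -` {True} = {u}" using assms by auto
    thus ?thesis using True n unfolding pmf_map measure_pmf_of_set[OF fin(2,1)] by simp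
  next
    case False
    have "{..<n} \<inter> (\<lambda>a. a = u) -` {False} = {..<n} - {u}" by auto
    hence "card ({..<n} \<inter> (\<lambda>a. a = u) -` {False}) = n - 1" using assms by simp
    thus ?thesis using False n assms unfolding pmf_map measure_pmf_of_set[OF fin(2,1)]
      by (simp add: of_nat_diff field_simps)
  qed
qed

definition Sl :: "nat \<Rightarrow> state \<Rightarrow> (nat \<times> nat) set" where
  "Sl n x = {(v, i). v < n \<and> i < 6 \<and> x v \<noteq> None}"

lemma Sl_sub: "Sl n x \<subseteq> {..<n} \<times> {..<6}" unfolding Sl_def by auto

lemma card_Sl: "card (Sl n x) = card (defined_nodes n x) * 6"
proof -
  have "Sl n x = defined_nodes n x \<times> {..<6}" unfolding Sl_def defined_nodes_def by auto
  thus ?thesis by (simp add: card_cartesian_product)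
qed

lemma received_Sl: "received n 6 x tgt u = {s \<in> Sl n x. tgt s = u}"
  unfolding received_def Sl_def by auto

lemma count_binomial:
  assumes "u < n"
  shows "map_pmf (\<lambda>tgt. card (received n 6 x tgt u)) (targets_pmf n 6)
         = binomial_pmf (card (Sl n x)) (1 / real n)"
proof -
  define A where "A = {..<n} \<times> {..<(6::nat)}"
  define S where "S = Sl n x"
  have finA: "finite A" unfolding A_def by auto
  have SA: "S \<subseteq> A" unfolding S_def A_def by (rule Sl_sub)
  have p: "1 / real n \<in> {0..1}" using assms by auto
  have "map_pmf (\<lambda>tgt. card (received n 6 x tgt u)) (targets_pmf n 6)
      = map_pmf (\<lambda>g. card {s\<in>S. g s}) (map_pmf (\<lambda>h. (\<lambda>a. a = u) \<circ> h) (Pi_pmf A 0 (\<lambda>_. pmf_of_set {..<n})))"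
    unfolding targets_pmf_def map_pmf_comp A_def S_def received_Sl by (simp add: o_def)
  also have "map_pmf (\<lambda>h. (\<lambda>a. a = u) \<circ> h) (Pi_pmf A 0 (\<lambda>_. pmf_of_set {..<n}))
      = Pi_pmf A (0 = u) (\<lambda>_. map_pmf (\<lambda>a. a = u) (pmf_of_set {..<n}))"
    by (rule Pi_pmf_map[symmetric]) (auto simp: finA)
  also have "\<dots> = Pi_pmf A (0 = u) (\<lambda>_. bernoulli_pmf (1 / real n))"
    using bern_eq[OF assms] by simp
  also have "map_pmf (\<lambda>g. card {s\<in>S. g s}) \<dots>
      = map_pmf (\<lambda>g. card {s\<in>S. g s}) (map_pmf (\<lambda>f s. if s \<in> S then f s else (0 = u)) \<dots>)"
    unfolding map_pmf_comp by (intro map_pmf_cong refl) (auto intro!: arg_cong[where f=card])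
  also have "\<dots> = map_pmf (\<lambda>g. card {s\<in>S. g s}) (Pi_pmf S (0 = u) (\<lambda>_. bernoulli_pmf (1 / real n)))"
    by (subst Pi_pmf_subset[OF finA SA]) simp
  also have "\<dots> = binomial_pmf (card S) (1 / real n)"
    by (rule binomial_pmf_altdef'[symmetric]) (use finA SA p finite_subset in auto)
  finally show ?thesis unfolding S_def .
qed

lemma EZ_bound:
  assumes n: "n \<ge> 200" and D: "real (card (defined_nodes n x)) \<ge> 3 * real n / 4"
  shows "measure_pmf.expectation (targets_pmf n 6) (\<lambda>tgt. real (Zf n x tgt)) \<le> real n * (23/125)"
proof -
  define T where "T = targets_pmf n 6"
  define m where "m = card (Sl n x)"
  have m: "real m \<ge> 9/2 * real n" using D unfolding m_def card_Sl by simp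
  have finT: "finite (set_pmf T)" unfolding T_def targets_pmf_def
  proof (intro fin_Pi_pmf)
    fix i assume "i \<in> {..<n} \<times> {..<(6::nat)}"
    hence "{..<n} \<noteq> {}" by auto
    thus "finite (set_pmf (pmf_of_set {..<n}))" by (subst set_pmf_of_set) auto
  qed auto
  have Z: "real (Zf n x tgt) = (\<Sum>u<n. indicator {tgt. card (received n 6 x tgt u) < 3} tgt)" for tgt
  proof -
    have e: "{u. u < n \<and> card (received n 6 x tgt u) < 3} = {u\<in>{..<n}. card (received n 6 x tgt u) < 3}"
      by auto
    have "real (Zf n x tgt) = (\<Sum>u\<in>{u\<in>{..<n}. card (received n 6 x tgt u) < 3}. 1)"
      unfolding Zf_def e by simp
    also have "\<dots> = (\<Sum>u<n. if card (received n 6 x tgt u) < 3 then 1 else 0)"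
      by (rule sum.inter_filter) simp
    also have "\<dots> = (\<Sum>u<n. indicator {tgt. card (received n 6 x tgt u) < 3} tgt)"
      by (intro sum.cong refl) (simp add: indicator_def)
    finally show ?thesis .
  qed
  have "measure_pmf.expectation T (\<lambda>tgt. real (Zf n x tgt))
      = (\<Sum>u<n. measure_pmf.expectation T (indicator {tgt. card (received n 6 x tgt u) < 3}))"
    unfolding Z by (rule Bochner_Integration.integral_sum) (auto intro: integrable_measure_pmf_finite finT)
  also have "\<dots> = (\<Sum>u<n. (\<Sum>k<3. real (m choose k) * (1/real n)^k * (1 - 1/real n)^(m-k)))"
  proof (rule sum.cong[OF refl])
    fix u assume u: "u \<in> {..<n}"
    have "measure_pmf.expectation T (indicator {tgt. card (received n 6 x tgt u) < 3})
        = measure_pmf.prob T {tgt. card (received n 6 x tgt u) < 3}" by simp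
    also have "\<dots> = measure_pmf.prob (map_pmf (\<lambda>tgt. card (received n 6 x tgt u)) T) {..<3}"
      by (simp add: vimage_def lessThan_def)
    also have "\<dots> = measure_pmf.prob (binomial_pmf m (1 / real n)) {..<3}"
      unfolding T_def m_def using u count_binomial[of u n x] by simp
    also have "\<dots> = (\<Sum>k<3. real (m choose k) * (1/real n)^k * (1 - 1/real n)^(m-k))"
      using u by (simp add: measure_measure_pmf_finite)
    finally show "measure_pmf.expectation T (indicator {tgt. card (received n 6 x tgt u) < 3})
        = (\<Sum>k<3. real (m choose k) * (1/real n)^k * (1 - 1/real n)^(m-k))" .
  qed
  also have "\<dots> \<le> (\<Sum>u<n. 23/125)"
    by (intro sum_mono q_bound[OF n m])
  finally show ?thesis unfolding T_def by simp
qed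



lemma ev_small: "\<forall>\<^sub>F n in sequentially. exp (- (49/12000000) * real n) \<le> real n powr (-1)"
  by real_asymp

theorem lemma2:
  fixes \<epsilon> :: real
  assumes "\<epsilon> \<le> 1/16"
  shows "\<exists>c>0. \<exists>N. \<forall>n\<ge>N. \<forall>(x :: state) (B :: nat set).
           real (card (defined_nodes n x)) \<ge> 3 * real n / 4 \<longrightarrow>
           B \<subseteq> {..<n} \<longrightarrow> real (card B) \<le> \<epsilon> * real n \<longrightarrow>
           measure_pmf.prob (round_pmf n 6 3 x B)
             {y. real (card (defined_nodes n y)) \<ge> 3 * real n / 4}
           \<ge> 1 - real n powr (- c)"
proof -
  obtain N0 where N0: "\<And>n. n \<ge> N0 \<Longrightarrow> exp (- (49/12000000) * real n) \<le> real n powr (-1)"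
    using ev_small unfolding eventually_sequentially by blast
  have "\<forall>n\<ge>max N0 200. \<forall>(x :: state) (B :: nat set).
           real (card (defined_nodes n x)) \<ge> 3 * real n / 4 \<longrightarrow>
           B \<subseteq> {..<n} \<longrightarrow> real (card B) \<le> \<epsilon> * real n \<longrightarrow>
           measure_pmf.prob (round_pmf n 6 3 x B)
             {y. real (card (defined_nodes n y)) \<ge> 3 * real n / 4}
           \<ge> 1 - real n powr (- 1)"
  proof (intro allI impI)
    fix n x B
    assume n: "max N0 200 \<le> n" and D: "real (card (defined_nodes n x)) \<ge> 3 * real n / 4"
      and Bs: "B \<subseteq> {..<n}" and Bc: "real (card B) \<le> \<epsilon> * real n"
    have n200: "n \<ge> 200" and nN0: "n \<ge> N0" using n by auto
    define T where "T = targets_pmf n 6"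
    define I where "I = {..<n} \<times> {..<(6::nat)}"
    define EZ where "EZ = measure_pmf.expectation T (\<lambda>tgt. real (Zf n x tgt))"
    define s where "s = 7 * real n / 2000"
    have EZ: "EZ \<le> real n * (23/125)" unfolding EZ_def T_def by (rule EZ_bound[OF n200 D])
    have Bc': "real (card B) \<le> real n / 16"
    proof -
      have "\<epsilon> * real n \<le> 1/16 * real n" using assms by (intro mult_right_mono) auto
      thus ?thesis using Bc by linarith
    qed
    have good: "{tgt. \<not> (real (Zf n x tgt) \<ge> EZ + s)}
        \<subseteq> {tgt. 3 * real n / 4 \<le> real (card {u. u < n \<and> active n 6 3 x B tgt u})}"
    proof safe
      fix tgt assume "\<not> (real (Zf n x tgt) \<ge> EZ + s)"
      hence Zl: "real (Zf n x tgt) \<le> 3 * real n / 16" using EZ by (simp add: s_def)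
      have "{..<n} \<subseteq> {u. u < n \<and> active n 6 3 x B tgt u} \<union> B \<union> {u. u < n \<and> card (received n 6 x tgt u) < 3}"
        unfolding active_def by auto
      hence "card {..<n} \<le> card ({u. u < n \<and> active n 6 3 x B tgt u} \<union> B \<union> {u. u < n \<and> card (received n 6 x tgt u) < 3})"
        by (intro card_mono) (use Bs finite_subset in auto)
      also have "\<dots> \<le> card {u. u < n \<and> active n 6 3 x B tgt u} + card B + Zf n x tgt"
        unfolding Zf_def by (intro order.trans[OF card_Un_le] add_mono order.refl card_Un_le)
      finally have "real n \<le> real (card {u. u < n \<and> active n 6 3 x B tgt u}) + real (card B) + real (Zf n x tgt)"
        by (simp only: card_lessThan of_nat_add[symmetric] of_nat_le_iff)
      thus "3 * real n / 4 \<le> real (card {u. u < n \<and> active n 6 3 x B tgt u})"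
        using Zl Bc' by linarith
    qed
    have tail: "measure_pmf.prob T {tgt. real (Zf n x tgt) \<ge> EZ + s} \<le> exp (- 2 * s\<^sup>2 / (6 * real n))"
      unfolding EZ_def T_def targets_pmf_def
    proof (rule mcd_tail[where c = "\<lambda>_. 1"])
      show "finite ({..<n} \<times> {..<(6::nat)})" by auto
      show "\<And>i. i \<in> {..<n} \<times> {..<6} \<Longrightarrow> finite (set_pmf (pmf_of_set {..<n}))"
        using n200 by (subst set_pmf_of_set) auto
      show "s > 0" using n200 by (simp add: s_def)
      show "\<And>i g a b. real (Zf n x (g(i:=a))) - real (Zf n x (g(i:=b))) \<le> 1" by (rule Zf_bd)
      show "(\<Sum>i\<in>{..<n} \<times> {..<(6::nat)}. 1\<^sup>2) = 6 * real n" by simp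
      show "6 * real n > 0" using n200 by simp
    qed
    also have "exp (- 2 * s\<^sup>2 / (6 * real n)) = exp (- (49/12000000) * real n)"
      using n200 by (simp add: s_def power2_eq_square field_simps)
    also have "\<dots> \<le> real n powr (-1)" by (rule N0[OF nN0])
    finally have tail': "measure_pmf.prob T {tgt. real (Zf n x tgt) \<ge> EZ + s} \<le> real n powr (-1)" .
    have "1 - real n powr (-1) \<le> 1 - measure_pmf.prob T {tgt. real (Zf n x tgt) \<ge> EZ + s}"
      using tail' by simp
    also have "\<dots> = measure_pmf.prob T (UNIV - {tgt. real (Zf n x tgt) \<ge> EZ + s})"
      using measure_pmf.prob_compl[of "{tgt. EZ + s \<le> real (Zf n x tgt)}" T] by simp
    also have "\<dots> \<le> measure_pmf.prob T {tgt. 3 * real n / 4 \<le> real (card {u. u < n \<and> active n 6 3 x B tgt u})}"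
      using good by (intro measure_pmf.finite_measure_mono) auto
    also have "\<dots> = measure_pmf.prob (round_pmf n 6 3 x B) {y. real (card (defined_nodes n y)) \<ge> 3 * real n / 4}"
      unfolding T_def using round_reduce[where P = "\<lambda>c. 3 * real n / 4 \<le> real c"] by simp
    finally show "measure_pmf.prob (round_pmf n 6 3 x B) {y. real (card (defined_nodes n y)) \<ge> 3 * real n / 4}
           \<ge> 1 - real n powr (- 1)" .
  qed
  note main = this
  show ?thesis
    apply (rule exI[of _ "1::real"])
    apply (rule conjI)
     apply simp
    apply (rule exI[of _ "max N0 200"])
    apply (rule main)
    done
qed


end
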